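(* There is an evolutionary graph that is not isothermal but for which, for every $r>1$, the fixation probability of the weighted Moran process with fitness $r$ started from a single uniformly random initial mutant equals $\rho_{\mathrm{reg}}(r,n)=\frac{1-1/r}{1-1/r^n}$, where $n$ is the number of vertices.
   Context: An evolutionary graph is a finite vertex set $V$ together with weights $w_{uv}\ge 0$ for ordered pairs $(u,v)$ (with $w_{uv}=0$ when there is no edge $(u,v)$) such that $\sum_{v\in V}w_{uv}=1$ for every $u\in V$. The weighted Moran process with fitness $r$: initially one vertex is a mutant and the others are non-mutants; at each step a vertex $u$ is chosen with probability proportional to its fitness (mutants $r$, non-mutants $1$), then a vertex $v$ is chosen with probability $w_{uv}$, and the state of $u$ is copied to $v$. Fixation is the event that eventually all vertices are mutants. The evolutionary graph is isothermal if $\sum_{v\in V}w_{vu}=1$ for every $u\in V$. *)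

theory Defs
  imports Complex_Main
begin

definition evolutionary_graph :: "'a set \<Rightarrow> ('a \<Rightarrow> 'a \<Rightarrow> real) \<Rightarrow> bool" where
  "evolutionary_graph V w \<longleftrightarrow> finite V \<and> V \<noteq> {} \<and>
     (\<forall>u\<in>V. \<forall>v\<in>V. w u v \<ge> 0) \<and> (\<forall>u\<in>V. (\<Sum>v\<in>V. w u v) = 1)"

definition isothermal :: "'a set \<Rightarrow> ('a \<Rightarrow> 'a \<Rightarrow> real) \<Rightarrow> bool" where
  "isothermal V w \<longleftrightarrow> (\<forall>u\<in>V. (\<Sum>v\<in>V. w v u) = 1)"

text \<open>One step of the weighted Moran process, as an operator on functions of the state
  (state = set S of mutant vertices): the expected value of f after one step from S.\<close>
definition moran_step :: "'a set \<Rightarrow> ('a \<Rightarrow> 'a \<Rightarrow> real) \<Rightarrow> real \<Rightarrow> ('a set \<Rightarrow> real) \<Rightarrow> 'a set \<Rightarrow> real" where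
  "moran_step V w r f S =
     (let fit = (\<lambda>u. if u \<in> S then r else 1);
          F = (\<Sum>u\<in>V. fit u)
      in \<Sum>u\<in>V. \<Sum>v\<in>V. (fit u / F) * w u v * f (if u \<in> S then insert v S else S - {v}))"

definition all_mutant_prob :: "'a set \<Rightarrow> ('a \<Rightarrow> 'a \<Rightarrow> real) \<Rightarrow> real \<Rightarrow> nat \<Rightarrow> 'a set \<Rightarrow> real" where
  "all_mutant_prob V w r t = (moran_step V w r ^^ t) (\<lambda>S. if S = V then 1 else 0)"

text \<open>Fixation probability: since the all-mutant state is absorbing, the probability of
  eventually reaching it is the limit of the (nondecreasing) t-step probabilities.\<close>
definition fixation_prob :: "'a set \<Rightarrow> ('a \<Rightarrow> 'a \<Rightarrow> real) \<Rightarrow> real \<Rightarrow> 'a set \<Rightarrow> real" where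
  "fixation_prob V w r S = lim (\<lambda>t. all_mutant_prob V w r t S)"

definition fixation_prob_uniform :: "'a set \<Rightarrow> ('a \<Rightarrow> 'a \<Rightarrow> real) \<Rightarrow> real \<Rightarrow> real" where
  "fixation_prob_uniform V w r = (\<Sum>u\<in>V. fixation_prob V w r {u}) / real (card V)"

definition rho_reg :: "real \<Rightarrow> nat \<Rightarrow> real" where
  "rho_reg r n = (1 - 1 / r) / (1 - 1 / r ^ n)"

end

theory Submission
  imports Defs
begin

definition VV :: "nat set" where "VV = {0,1,2}"
definition ww :: "nat \<Rightarrow> nat \<Rightarrow> real" where
  "ww u v = (if u = v then 0 else if u = 0 then 1/2 else if v = 0 then 3/4 else 1/4)"

definition hA :: "real \<Rightarrow> real" where "hA r = r^2*(2*r+1)/(2*(r+1)*(r^2+r+1))"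
definition hB :: "real \<Rightarrow> real" where "hB r = r^2*(4*r+5)/(4*(r+1)*(r^2+r+1))"
definition hC :: "real \<Rightarrow> real" where "hC r = r*(2*r^2+4*r+3)/(2*(r+1)*(r^2+r+1))"
definition hD :: "real \<Rightarrow> real" where "hD r = r*(2*r+1)*(2*r+3)/(4*(r+1)*(r^2+r+1))"

definition hh :: "real \<Rightarrow> nat set \<Rightarrow> real" where
  "hh r S = (if 0 \<in> S \<and> 1 \<in> S \<and> 2 \<in> S then 1
     else if (0 \<in> S \<and> 1 \<in> S) \<or> (0 \<in> S \<and> 2 \<in> S) then hD r
     else if 1 \<in> S \<and> 2 \<in> S then hC r
     else if 0 \<in> S then hA r
     else if 1 \<in> S \<or> 2 \<in> S then hB r
     else 0)"

lemma nz: assumes "r > (1::real)" shows "r+1 \<noteq> 0" "r^2+r+1 \<noteq> 0" "r+2 \<noteq> 0" "2*r+1 \<noteq> 0" "r \<noteq> 0"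
  using assms by (auto simp: add_pos_pos) (smt (verit) power2_eq_square mult_pos_pos)

lemma eqs:
  assumes r: "r > (1::real)"
  shows "hA r * (r+3/2) = r * hD r" "hB r * (4*r+3) = r * (3 * hD r + hC r)"
    "hC r * (3*r+2) = 3*r + 2 * hB r" "hD r * (3*r+4) = 3*r + 3 * hB r + hA r"
proof -
  define q where "q = (r+1)*(r^2+r+1)"
  have q: "q \<noteq> 0" using nz[OF r] unfolding q_def by simp
  have a: "hA r = r^2*(2*r+1)/(2*q)" "hB r = r^2*(4*r+5)/(4*q)"
     "hC r = r*(2*r^2+4*r+3)/(2*q)" "hD r = r*(2*r+1)*(2*r+3)/(4*q)"
    unfolding hA_def hB_def hC_def hD_def q_def by (simp_all add: mult.assoc)
  show "hA r * (r+3/2) = r * hD r" unfolding a using q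
    by (simp add: field_simps) (simp add: algebra_simps power2_eq_square)
  show "hB r * (4*r+3) = r * (3 * hD r + hC r)" unfolding a using q
    by (simp add: field_simps) (simp add: q_def algebra_simps power2_eq_square)
  show "hC r * (3*r+2) = 3*r + 2 * hB r" unfolding a using q
    by (simp add: field_simps) (simp add: q_def algebra_simps power2_eq_square)
  show "hD r * (3*r+4) = 3*r + 3 * hB r + hA r" unfolding a using q
    by (simp add: field_simps) (simp add: q_def algebra_simps power2_eq_square)
qed

lemma harm0: assumes r: "r > 1" shows "moran_step VV ww r (hh r) {0} = hh r {0}"
proof -
  have p: "r > 0" "2*r+4 \<noteq> 0" "4*r+8 \<noteq> 0" "2*r+1 \<noteq> 0" "4*r+2 \<noteq> 0" "r+2 \<noteq> 0"
    using r by auto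
  note e = eqs[OF r]
  have f: "(r+2)*(hA r * (r+3/2)) = (r+2)*(r * hD r)" "(r+2)*(hB r * (4*r+3)) = (r+2)*(r * (3 * hD r + hC r))"
    "(2*r+1)*(hC r * (3*r+2)) = (2*r+1)*(3*r + 2 * hB r)" "(2*r+1)*(hD r * (3*r+4)) = (2*r+1)*(3*r + 3 * hB r + hA r)"
    using e by simp_all
  show ?thesis
    unfolding moran_step_def VV_def ww_def hh_def Let_def using p apply simp
    using p apply (simp add: divide_simps)
    using e by algebra
qed

lemma harm1: assumes r: "r > 1" shows "moran_step VV ww r (hh r) {1} = hh r {1}"
proof -
  have p: "r > 0" "2*r+4 \<noteq> 0" "4*r+8 \<noteq> 0" "2*r+1 \<noteq> 0" "4*r+2 \<noteq> 0" "r+2 \<noteq> 0"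
    using r by auto
  note e = eqs[OF r]
  have f: "(r+2)*(hA r * (r+3/2)) = (r+2)*(r * hD r)" "(r+2)*(hB r * (4*r+3)) = (r+2)*(r * (3 * hD r + hC r))"
    "(2*r+1)*(hC r * (3*r+2)) = (2*r+1)*(3*r + 2 * hB r)" "(2*r+1)*(hD r * (3*r+4)) = (2*r+1)*(3*r + 3 * hB r + hA r)"
    using e by simp_all
  show ?thesis
    unfolding moran_step_def VV_def ww_def hh_def Let_def using p apply simp
    using p apply (simp add: divide_simps)
    using e by algebra
qed

lemma harm2: assumes r: "r > 1" shows "moran_step VV ww r (hh r) {2} = hh r {2}"
proof -
  have p: "r > 0" "2*r+4 \<noteq> 0" "4*r+8 \<noteq> 0" "2*r+1 \<noteq> 0" "4*r+2 \<noteq> 0" "r+2 \<noteq> 0"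
    using r by auto
  note e = eqs[OF r]
  have f: "(r+2)*(hA r * (r+3/2)) = (r+2)*(r * hD r)" "(r+2)*(hB r * (4*r+3)) = (r+2)*(r * (3 * hD r + hC r))"
    "(2*r+1)*(hC r * (3*r+2)) = (2*r+1)*(3*r + 2 * hB r)" "(2*r+1)*(hD r * (3*r+4)) = (2*r+1)*(3*r + 3 * hB r + hA r)"
    using e by simp_all
  show ?thesis
    unfolding moran_step_def VV_def ww_def hh_def Let_def using p apply simp
    using p apply (simp add: divide_simps)
    using e by algebra
qed

lemma harm3: assumes r: "r > 1" shows "moran_step VV ww r (hh r) {1,2} = hh r {1,2}"
proof -
  have p: "r > 0" "2*r+4 \<noteq> 0" "4*r+8 \<noteq> 0" "2*r+1 \<noteq> 0" "4*r+2 \<noteq> 0" "r+2 \<noteq> 0"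
    using r by auto
  note e = eqs[OF r]
  have f: "(r+2)*(hA r * (r+3/2)) = (r+2)*(r * hD r)" "(r+2)*(hB r * (4*r+3)) = (r+2)*(r * (3 * hD r + hC r))"
    "(2*r+1)*(hC r * (3*r+2)) = (2*r+1)*(3*r + 2 * hB r)" "(2*r+1)*(hD r * (3*r+4)) = (2*r+1)*(3*r + 3 * hB r + hA r)"
    using e by simp_all
  show ?thesis
    unfolding moran_step_def VV_def ww_def hh_def Let_def using p apply simp
    using p apply (simp add: divide_simps)
    using e by algebra
qed

lemma harm4: assumes r: "r > 1" shows "moran_step VV ww r (hh r) {0,1} = hh r {0,1}"
proof -
  have p: "r > 0" "2*r+4 \<noteq> 0" "4*r+8 \<noteq> 0" "2*r+1 \<noteq> 0" "4*r+2 \<noteq> 0" "r+2 \<noteq> 0"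
    using r by auto
  note e = eqs[OF r]
  have f: "(r+2)*(hA r * (r+3/2)) = (r+2)*(r * hD r)" "(r+2)*(hB r * (4*r+3)) = (r+2)*(r * (3 * hD r + hC r))"
    "(2*r+1)*(hC r * (3*r+2)) = (2*r+1)*(3*r + 2 * hB r)" "(2*r+1)*(hD r * (3*r+4)) = (2*r+1)*(3*r + 3 * hB r + hA r)"
    using e by simp_all
  show ?thesis
    unfolding moran_step_def VV_def ww_def hh_def Let_def using p apply simp
    using p apply (simp add: divide_simps)
    using e by algebra
qed

lemma harm5: assumes r: "r > 1" shows "moran_step VV ww r (hh r) {0,2} = hh r {0,2}"
proof -
  have p: "r > 0" "2*r+4 \<noteq> 0" "4*r+8 \<noteq> 0" "2*r+1 \<noteq> 0" "4*r+2 \<noteq> 0" "r+2 \<noteq> 0"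
    using r by auto
  note e = eqs[OF r]
  have f: "(r+2)*(hA r * (r+3/2)) = (r+2)*(r * hD r)" "(r+2)*(hB r * (4*r+3)) = (r+2)*(r * (3 * hD r + hC r))"
    "(2*r+1)*(hC r * (3*r+2)) = (2*r+1)*(3*r + 2 * hB r)" "(2*r+1)*(hD r * (3*r+4)) = (2*r+1)*(3*r + 3 * hB r + hA r)"
    using e by simp_all
  show ?thesis
    unfolding moran_step_def VV_def ww_def hh_def Let_def using p apply simp
    using p apply (simp add: divide_simps)
    using e by algebra
qed

lemma moran_diff:
  "moran_step V w r (\<lambda>S. f S - g S) S = moran_step V w r f S - moran_step V w r g S"
  unfolding moran_step_def Let_def by (simp add: sum_subtractf right_diff_distrib)

lemma absorb_V:
  assumes G: "evolutionary_graph V w" and r: "r > 0"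
  shows "moran_step V w r f V = f V"
proof -
  from G have fin: "finite V" and ne: "V \<noteq> {}" and rs: "\<forall>u\<in>V. (\<Sum>v\<in>V. w u v) = 1"
    unfolding evolutionary_graph_def by auto
  have c: "real (card V) > 0" using fin ne by (simp add: card_gt_0_iff)
  have "moran_step V w r f V = (\<Sum>u\<in>V. \<Sum>v\<in>V. r / (real (card V) * r) * w u v * f V)"
    unfolding moran_step_def Let_def by (simp add: insert_absorb)
  also have "\<dots> = (\<Sum>u\<in>V. r / (real (card V) * r) * f V * (\<Sum>v\<in>V. w u v))"
    by (rule sum.cong[OF refl], subst sum_distrib_left) (simp add: mult_ac)
  also have "\<dots> = (\<Sum>u\<in>V. r / (real (card V) * r) * f V)"
    using rs by simp
  also have "\<dots> = f V" using c r by simp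
  finally show ?thesis .
qed

lemma absorb_empty:
  assumes G: "evolutionary_graph V w"
  shows "moran_step V w r f {} = f {}"
proof -
  from G have fin: "finite V" and ne: "V \<noteq> {}" and rs: "\<forall>u\<in>V. (\<Sum>v\<in>V. w u v) = 1"
    unfolding evolutionary_graph_def by auto
  have c: "real (card V) > 0" using fin ne by (simp add: card_gt_0_iff)
  have "moran_step V w r f {} = (\<Sum>u\<in>V. \<Sum>v\<in>V. 1 / real (card V) * w u v * f {})"
    unfolding moran_step_def Let_def by simp
  also have "\<dots> = (\<Sum>u\<in>V. 1 / real (card V) * f {} * (\<Sum>v\<in>V. w u v))"
    by (rule sum.cong[OF refl], subst sum_distrib_left) (simp add: mult_ac)
  also have "\<dots> = (\<Sum>u\<in>V. 1 / real (card V) * f {})"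
    using rs by simp
  also have "\<dots> = f {}" using c by simp
  finally show ?thesis .
qed

lemma contract:
  assumes G: "evolutionary_graph V w" and r: "r > 0" and S: "S \<subseteq> V"
    and bnd: "\<forall>T\<subseteq>V. \<bar>f T\<bar> \<le> M" and fV: "f V = 0" and f0: "f {} = 0"
    and u0: "u0 \<in> V" and v0: "v0 \<in> V"
    and ab: "(if u0 \<in> S then insert v0 S else S - {v0}) \<in> {V, {}}"
    and dl: "\<delta> \<le> (if u0 \<in> S then r else 1) / (\<Sum>u\<in>V. if u \<in> S then r else 1) * w u0 v0"
  shows "\<bar>moran_step V w r f S\<bar> \<le> (1 - \<delta>) * M"
proof -
  from G have fin: "finite V" and ne: "V \<noteq> {}" and rs: "\<forall>u\<in>V. (\<Sum>v\<in>V. w u v) = 1"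
    and wn: "\<forall>u\<in>V. \<forall>v\<in>V. w u v \<ge> 0"
    unfolding evolutionary_graph_def by auto
  define fit where "fit = (\<lambda>u. if u \<in> S then r else (1::real))"
  define F where "F = (\<Sum>u\<in>V. fit u)"
  have fitp: "fit u > 0" for u using r unfolding fit_def by auto
  have Fp: "F > 0" unfolding F_def using fin ne fitp by (simp add: sum_pos)
  define p where "p u v = fit u / F * w u v" for u v
  define T where "T u v = (if u \<in> S then insert v S else S - {v})" for u v
  have ms: "moran_step V w r f S = (\<Sum>u\<in>V. \<Sum>v\<in>V. p u v * f (T u v))"
    unfolding moran_step_def Let_def p_def T_def F_def fit_def by simp
  have Tsub: "T u v \<subseteq> V" if "v \<in> V" for u v using S that unfolding T_def by auto
  have pn: "p u v \<ge> 0" if "u \<in> V" "v \<in> V" for u v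
    using wn that fitp[of u] Fp unfolding p_def by simp
  have psum: "(\<Sum>u\<in>V. \<Sum>v\<in>V. p u v) = 1"
  proof -
    have "(\<Sum>u\<in>V. \<Sum>v\<in>V. p u v) = (\<Sum>u\<in>V. fit u / F * (\<Sum>v\<in>V. w u v))"
      unfolding p_def by (simp add: sum_distrib_left)
    also have "\<dots> = (\<Sum>u\<in>V. fit u / F)" using rs by simp
    also have "\<dots> = F / F" unfolding F_def by (simp add: sum_divide_distrib[symmetric])
    finally show ?thesis using Fp by simp
  qed
  have M0: "M \<ge> 0" using bnd order_trans[OF abs_ge_zero] by blast
  have "T u0 v0 = V \<or> T u0 v0 = {}" using ab unfolding T_def by (simp only: insert_iff empty_iff simp_thms)
  then have fT0: "f (T u0 v0) = 0" using fV f0 by metis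
  define q where "q u v = p u v * M - (if u = u0 \<and> v = v0 then p u v * M else 0)" for u v
  have each: "\<bar>p u v * f (T u v)\<bar> \<le> q u v" if "u \<in> V" "v \<in> V" for u v
  proof (cases "u = u0 \<and> v = v0")
    case True then show ?thesis using fT0 unfolding q_def by simp
  next
    case False
    have "\<bar>p u v * f (T u v)\<bar> = p u v * \<bar>f (T u v)\<bar>" using pn[OF that] by (simp add: abs_mult)
    also have "\<dots> \<le> p u v * M" using bnd Tsub[OF that(2)] pn[OF that] by (simp add: mult_left_mono)
    finally show ?thesis using False unfolding q_def by auto
  qed
  have dsum: "(\<Sum>u\<in>V. \<Sum>v\<in>V. if u = u0 \<and> v = v0 then p u v * M else 0) = p u0 v0 * M"
  proof -
    have "(\<Sum>v\<in>V. if u = u0 \<and> v = v0 then p u v * M else 0) = (if u = u0 then p u v0 * M else 0)" for u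
      by (cases "u = u0") (simp_all add: fin v0)
    then show ?thesis by (simp add: fin u0)
  qed
  have qsum: "(\<Sum>u\<in>V. \<Sum>v\<in>V. q u v) = M - p u0 v0 * M"
    unfolding q_def by (simp add: sum_subtractf dsum sum_distrib_right[symmetric] psum)
  have "\<bar>moran_step V w r f S\<bar> \<le> (\<Sum>u\<in>V. \<bar>\<Sum>v\<in>V. p u v * f (T u v)\<bar>)"
    unfolding ms by (rule sum_abs)
  also have "\<dots> \<le> (\<Sum>u\<in>V. \<Sum>v\<in>V. \<bar>p u v * f (T u v)\<bar>)"
    by (intro sum_mono sum_abs)
  also have "\<dots> \<le> (\<Sum>u\<in>V. \<Sum>v\<in>V. q u v)"
    by (intro sum_mono each)
  also have "\<dots> = (1 - p u0 v0) * M" using qsum by (simp add: algebra_simps)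
  also have "\<dots> \<le> (1 - \<delta>) * M"
    using dl M0 unfolding p_def fit_def F_def by (intro mult_right_mono) auto
  finally show ?thesis .
qed

lemma amp_Suc: "all_mutant_prob V w r (Suc t) = moran_step V w r (all_mutant_prob V w r t)"
  unfolding all_mutant_prob_def by simp

lemma conv:
  assumes G: "evolutionary_graph V w" and r: "r > 0"
    and harm: "\<forall>S\<subseteq>V. moran_step V w r h S = h S" and hV: "h V = 1" and h0: "h {} = 0"
    and hB: "\<forall>S\<subseteq>V. \<bar>h S\<bar> \<le> B" and d0: "0 < \<delta>" and d1: "\<delta> \<le> 1"
    and tr: "\<forall>S\<subseteq>V. S \<noteq> V \<and> S \<noteq> {} \<longrightarrow> (\<exists>u0\<in>V. \<exists>v0\<in>V.
        (if u0 \<in> S then insert v0 S else S - {v0}) \<in> {V, {}} \<and>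
        \<delta> \<le> (if u0 \<in> S then r else 1) / (\<Sum>u\<in>V. if u \<in> S then r else 1) * w u0 v0)"
    and S: "S \<subseteq> V"
  shows "(\<lambda>t. all_mutant_prob V w r t S) \<longlonglongrightarrow> h S"
proof -
  have ne: "V \<noteq> {}" using G unfolding evolutionary_graph_def by auto
  define e where "e t = (\<lambda>S. h S - all_mutant_prob V w r t S)" for t
  have claim: "(\<forall>S\<subseteq>V. \<bar>e t S\<bar> \<le> (B+1) * (1-\<delta>)^t) \<and> e t V = 0 \<and> e t {} = 0" for t
  proof (induction t)
    case 0
    have "\<bar>e 0 S\<bar> \<le> (B+1) * (1-\<delta>)^0" if "S \<subseteq> V" for S
    proof -
      have "\<bar>e 0 S\<bar> \<le> \<bar>h S\<bar> + \<bar>(if S = V then 1 else 0::real)\<bar>"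
        unfolding e_def all_mutant_prob_def funpow_0 id_def by (rule abs_triangle_ineq4)
      also have "\<dots> \<le> B + 1" using hB[rule_format, OF that] by (cases "S = V") simp_all
      finally show ?thesis by simp
    qed
    moreover have "e 0 V = 0" "e 0 {} = 0" using hV h0 ne unfolding e_def all_mutant_prob_def by auto
    ultimately show ?case by blast
  next
    case (Suc t)
    have ee: "e (Suc t) S = moran_step V w r (e t) S" if "S \<subseteq> V" for S
      unfolding e_def amp_Suc moran_diff using harm that by simp
    have eV: "e (Suc t) V = 0" using ee[of V] absorb_V[OF G r] Suc by simp
    have e0: "e (Suc t) {} = 0" using ee[of "{}"] absorb_empty[OF G] Suc by simp
    have "\<bar>e (Suc t) S\<bar> \<le> (B+1) * (1-\<delta>)^Suc t" if SV: "S \<subseteq> V" for S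
    proof (cases "S = V \<or> S = {}")
      case True
      then have "e (Suc t) S = 0" using eV e0 by auto
      moreover have "(B+1) * (1-\<delta>)^Suc t \<ge> 0"
        using hB[rule_format, of V] d1 by (intro mult_nonneg_nonneg) auto
      ultimately show ?thesis by simp
    next
      case False
      then have ex: "\<exists>u0\<in>V. \<exists>v0\<in>V.
        (if u0 \<in> S then insert v0 S else S - {v0}) \<in> {V, {}} \<and>
        \<delta> \<le> (if u0 \<in> S then r else 1) / (\<Sum>u\<in>V. if u \<in> S then r else 1) * w u0 v0"
        using tr[rule_format, OF SV] by (simp only: de_Morgan_disj simp_thms)
      then obtain u0 v0 where u0: "u0 \<in> V" and v0: "v0 \<in> V"
        and ab: "(if u0 \<in> S then insert v0 S else S - {v0}) \<in> {V, {}}"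
        and dl: "\<delta> \<le> (if u0 \<in> S then r else 1) / (\<Sum>u\<in>V. if u \<in> S then r else 1) * w u0 v0"
        by (elim bexE conjE) (rule that)
      have i1: "\<forall>T\<subseteq>V. \<bar>e t T\<bar> \<le> (B+1) * (1-\<delta>)^t" and i2: "e t V = 0" and i3: "e t {} = 0"
        using Suc.IH by blast+
      have "\<bar>moran_step V w r (e t) S\<bar> \<le> (1-\<delta>) * ((B+1) * (1-\<delta>)^t)"
        by (rule contract[OF G r SV i1 i2 i3 u0 v0 ab dl])
      then show ?thesis using ee[OF SV] by (simp add: mult_ac)
    qed
    then show ?case using eV e0 by blast
  qed
  have lim0: "(\<lambda>t. e t S) \<longlonglongrightarrow> 0"
  proof (rule tendsto_0_le[where K = "B+1"])
    show "(\<lambda>t. (1-\<delta>)^t) \<longlonglongrightarrow> 0" using d0 d1 by (intro LIMSEQ_power_zero) auto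
    show "\<forall>\<^sub>F t in sequentially. norm (e t S) \<le> norm ((1-\<delta>)^t) * (B+1)"
      using claim S d1 by (intro always_eventually allI) (simp add: mult_ac)
  qed
  have "(\<lambda>t. h S - e t S) \<longlonglongrightarrow> h S - 0" by (intro tendsto_intros lim0)
  then show ?thesis unfolding e_def by simp
qed

lemma subsets3:
  assumes "S \<subseteq> {0,1,2::nat}"
  shows "S \<in> {{},{0},{1},{2},{1,2},{0,1},{0,2},{0,1,2}}"
proof -
  have "S = (if 0 \<in> S then {0} else {}) \<union> (if 1 \<in> S then {1} else {}) \<union> (if 2 \<in> S then {2} else {})"
    using assms by auto
  then show ?thesis by (auto split: if_splits simp: insert_commute)
qed

lemma graph: "evolutionary_graph VV ww"
  unfolding evolutionary_graph_def VV_def ww_def by simp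

lemma harm_all: assumes r: "r > 1" shows "\<forall>S\<subseteq>VV. moran_step VV ww r (hh r) S = hh r S"
proof (intro allI impI)
  fix S assume "S \<subseteq> VV"
  then have "S \<in> {{},{0},{1},{2},{1,2},{0,1},{0,2},{0,1,2}}" using subsets3 unfolding VV_def by blast
  moreover have "moran_step VV ww r (hh r) VV = hh r VV" using absorb_V[OF graph] r by simp
  moreover have "moran_step VV ww r (hh r) {} = hh r {}" using absorb_empty[OF graph] by simp
  ultimately show "moran_step VV ww r (hh r) S = hh r S"
    using harm0[OF r] harm1[OF r] harm2[OF r] harm3[OF r] harm4[OF r] harm5[OF r]
    unfolding VV_def by auto
qed

lemma trans_ok:
  assumes r: "r > (1::real)"
  shows "\<forall>S\<subseteq>VV. S \<noteq> VV \<and> S \<noteq> {} \<longrightarrow> (\<exists>u0\<in>VV. \<exists>v0\<in>VV.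
        (if u0 \<in> S then insert v0 S else S - {v0}) \<in> {VV, {}} \<and>
        1/(12*r) \<le> (if u0 \<in> S then r else 1) / (\<Sum>u\<in>VV. if u \<in> S then r else 1) * ww u0 v0)"
    (is "\<forall>S\<subseteq>VV. _ \<longrightarrow> ?P S")
proof (intro allI impI)
  fix S assume S: "S \<subseteq> VV" and nt: "S \<noteq> VV \<and> S \<noteq> {}"
  have rr: "r * r > r" using r by simp
  have i1: "1/(12*r) \<le> 1/(r+2)*(3/4)" using r apply (simp add: divide_simps) done
  have i2: "1/(12*r) \<le> 1/(r+2)*(1/2)" using r apply (simp add: divide_simps) done
  have i3: "1/(12*r) \<le> r/(2*r+1)*(3/4)" using r apply (simp add: divide_simps) apply (insert rr) apply linarith done
  have i4: "1/(12*r) \<le> r/(2*r+1)*(1/2)" using r apply (simp add: divide_simps) apply (insert rr) apply linarith done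
  have P0: "?P {0}"
    apply (rule bexI[where x=1], rule bexI[where x=0])
      apply (rule conjI)
    subgoal by (auto simp: VV_def)
    subgoal using r i1 by (simp add: VV_def ww_def)
    by (simp_all add: VV_def)
  have P1: "?P {1}"
    apply (rule bexI[where x=0], rule bexI[where x=1])
      apply (rule conjI)
    subgoal by (auto simp: VV_def)
    subgoal using r i2 by (simp add: VV_def ww_def add.commute)
    by (simp_all add: VV_def)
  have P2: "?P {2}"
    apply (rule bexI[where x=0], rule bexI[where x=2])
      apply (rule conjI)
    subgoal by (auto simp: VV_def)
    subgoal using r i2 by (simp add: VV_def ww_def add.commute)
    by (simp_all add: VV_def)
  have P3: "?P {1,2}"
    apply (rule bexI[where x=1], rule bexI[where x=0])
      apply (rule conjI)
    subgoal by (auto simp: VV_def)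
    subgoal using r i3 by (simp add: VV_def ww_def add_ac)
    by (simp_all add: VV_def)
  have P4: "?P {0,1}"
    apply (rule bexI[where x=0], rule bexI[where x=2])
      apply (rule conjI)
    subgoal by (auto simp: VV_def)
    subgoal using r i4 by (simp add: VV_def ww_def)
    by (simp_all add: VV_def)
  have P5: "?P {0,2}"
    apply (rule bexI[where x=0], rule bexI[where x=1])
      apply (rule conjI)
    subgoal by (auto simp: VV_def)
    subgoal using r i4 by (simp add: VV_def ww_def)
    by (simp_all add: VV_def)
  have "S \<in> {{0},{1},{2},{1,2},{0,1},{0,2}}"
    using subsets3[of S] S nt unfolding VV_def by auto
  then have "S = {0} \<or> S = {1} \<or> S = {2} \<or> S = {1,2} \<or> S = {0,1} \<or> S = {0,2}" by simp
  then show "?P S" by (elim disjE) (simp_all only: P0 P1 P2 P3 P4 P5)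
qed

lemma fix_eq:
  assumes r: "r > (1::real)" and u: "u \<in> VV"
  shows "fixation_prob VV ww r {u} = hh r {u}"
proof -
  have bnd: "\<forall>S\<subseteq>VV. \<bar>hh r S\<bar> \<le> 1 + \<bar>hA r\<bar> + \<bar>hB r\<bar> + \<bar>hC r\<bar> + \<bar>hD r\<bar>"
    unfolding hh_def by auto
  have "(\<lambda>t. all_mutant_prob VV ww r t {u}) \<longlonglongrightarrow> hh r {u}"
  proof (rule conv[OF graph _ harm_all[OF r] _ _ bnd _ _ trans_ok[OF r]])
    show "0 < r" "hh r VV = 1" "hh r {} = 0" "0 < 1/(12*r)" "1/(12*r) \<le> 1" "{u} \<subseteq> VV"
      using r u by (auto simp: VV_def hh_def)
  qed
  then show ?thesis unfolding fixation_prob_def by (rule limI)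
qed

theorem proposition1p12:
  shows "\<exists>(V :: nat set) (w :: nat \<Rightarrow> nat \<Rightarrow> real).
           evolutionary_graph V w \<and> \<not> isothermal V w \<and>
           (\<forall>r::real. r > 1 \<longrightarrow> fixation_prob_uniform V w r = rho_reg r (card V))"
proof (intro exI conjI allI impI)
  show "evolutionary_graph VV ww" by (rule graph)
  show "\<not> isothermal VV ww" unfolding isothermal_def VV_def ww_def by simp
  fix r :: real assume r: "r > 1"
  have c: "card VV = 3" unfolding VV_def by simp
  have "fixation_prob_uniform VV ww r = (hh r {0} + hh r {1} + hh r {2}) / 3"
    unfolding fixation_prob_uniform_def c using fix_eq[OF r] by (simp add: VV_def)
  also have "\<dots> = (hA r + 2 * hB r) / 3" unfolding hh_def by simp
  also have "\<dots> = rho_reg r (card VV)"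
  proof -
    define q where "q = (r+1)*(r^2+r+1)"
    have q: "q \<noteq> 0" using nz[OF r] unfolding q_def by simp
    have q2: "r^2+r+1 \<noteq> 0" using nz[OF r] by simp
    have r3: "r^3 - 1 = (r - 1) * (r^2+r+1)" by (simp add: algebra_simps power2_eq_square power3_eq_cube)
    have r3': "r^3 \<noteq> 1" using r3 r q2 by auto
    have a: "hA r = r^2*(2*r+1)/(2*q)" "hB r = r^2*(4*r+5)/(4*q)"
      unfolding hA_def hB_def q_def by (simp_all add: mult.assoc)
    have "(hA r + 2 * hB r) / 3 = r^2 / (r^2+r+1)"
      unfolding a using q q2 nz[OF r] by (simp add: divide_simps) (simp add: q_def algebra_simps power2_eq_square)
    also have "\<dots> = rho_reg r 3"
      unfolding rho_reg_def using r r3 r3' q2 by (simp add: divide_simps) (simp add: algebra_simps power2_eq_square power3_eq_cube)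
    finally show ?thesis using c by simp
  qed
  finally show "fixation_prob_uniform VV ww r = rho_reg r (card VV)" .
qed

end
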